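(* Let $K=\mathbb{Q}(\gamma)$ be a number field of degree $n\ge2$ and let $f=a_nX^n+\dotsb+a_0\in\mathbb{Z}[X]$ be irreducible with $f(\gamma)=0$. For $0\le j\le n$ put $p_j=a_n\gamma^j+a_{n-1}\gamma^{j-1}+\dotsb+a_{n-j}$ and $q_j=a_j+a_{j-1}\gamma^{-1}+\dotsb+a_0\gamma^{-j}$, and let $M=\mathbb{Z}+\mathbb{Z}\gamma+\dotsb+\mathbb{Z}\gamma^{n-1}$, $D=\mathbb{Z}p_0+\dotsb+\mathbb{Z}p_{n-1}$, $N=\mathbb{Z}q_0+\dotsb+\mathbb{Z}q_{n-1}$. Then $$\mathrm{Bl}(\mathbb{Z}+\mathbb{Z}\gamma)=M:M=\mathbb{Z}[\gamma]\cap\mathbb{Z}[\gamma^{-1}]=\mathbb{Z}+N=\mathbb{Z}+D,$$ and $N$ and $D$ are coprime invertible integral ideals of this ring $A=\mathrm{Bl}(\mathbb{Z}+\mathbb{Z}\gamma)$ (i.e. ideals contained in $A$), with $A/N\cong\mathbb{Z}/a_0\mathbb{Z}$ and $A/D\cong\mathbb{Z}/a_n\mathbb{Z}$ as rings, such that $N:D=\gamma\cdot A$.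
   Context: All colon operations are taken inside $K$: for additive subgroups $I,J\subseteq K$, $I:J=\{x\in K: xJ\subseteq I\}$, $IJ$ is the group of finite sums of products, $I^0=I:I$, $I^{k+1}=I^kI$, and $\mathrm{Bl}(I)=\bigcup_{k\ge0}(I^k:I^k)$. Ideals $N,D$ of a commutative ring $A$ are coprime if $N+D=A$; an ideal $N$ of $A$ is invertible if there is an $A$-submodule $J\subseteq K$ with $NJ=A$. *)

theory Defs
  imports "HOL-Computational_Algebra.Polynomial" "HOL-Algebra.IntRing"
begin

definition numfield :: "complex \<Rightarrow> complex set" where
  "numfield \<gamma> = {poly (map_poly of_rat p) \<gamma> / poly (map_poly of_rat q) \<gamma> | p q.
                    poly (map_poly of_rat q) \<gamma> \<noteq> 0}"

definition colon :: "complex set \<Rightarrow> complex set \<Rightarrow> complex set \<Rightarrow> complex set" where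
  "colon K I J = {x \<in> K. \<forall>y\<in>J. x * y \<in> I}"

definition setmul :: "complex set \<Rightarrow> complex set \<Rightarrow> complex set" where
  "setmul I J = {sum_list (map (\<lambda>(x, y). x * y) ps) | ps. set ps \<subseteq> I \<times> J}"

definition setadd :: "complex set \<Rightarrow> complex set \<Rightarrow> complex set" where
  "setadd I J = {x + y | x y. x \<in> I \<and> y \<in> J}"

fun setpow :: "complex set \<Rightarrow> complex set \<Rightarrow> nat \<Rightarrow> complex set" where
  "setpow K I 0 = colon K I I"
| "setpow K I (Suc k) = setmul (setpow K I k) I"

definition Bl :: "complex set \<Rightarrow> complex set \<Rightarrow> complex set" where
  "Bl K I = (\<Union>k. colon K (setpow K I k) (setpow K I k))"

definition zspan :: "(nat \<Rightarrow> complex) \<Rightarrow> nat \<Rightarrow> complex set" where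
  "zspan g m = {\<Sum>j<m. of_int (c j) * g j | c. True}"

definition Zset :: "complex set" where
  "Zset = range of_int"

definition Zadj :: "complex \<Rightarrow> complex set" where
  "Zadj x = {poly (map_poly of_int p) x | p. True}"

definition subring_struct :: "complex set \<Rightarrow> complex ring" where
  "subring_struct A = \<lparr>carrier = A, monoid.mult = (*), one = 1, zero = 0, add = (+)\<rparr>"

definition is_submodule :: "complex set \<Rightarrow> complex set \<Rightarrow> complex set \<Rightarrow> bool" where
  "is_submodule K A J \<longleftrightarrow> J \<subseteq> K \<and> 0 \<in> J \<and> (\<forall>x\<in>J. \<forall>y\<in>J. x + y \<in> J)
     \<and> (\<forall>x\<in>J. - x \<in> J) \<and> (\<forall>a\<in>A. \<forall>x\<in>J. a * x \<in> J)"

definition invertible_ideal :: "complex set \<Rightarrow> complex set \<Rightarrow> complex set \<Rightarrow> bool" where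
  "invertible_ideal K A N \<longleftrightarrow> (\<exists>J. is_submodule K A J \<and> setmul N J = A)"

end

theory Submission
  imports Defs "HOL-Computational_Algebra.Polynomial_Factorial"
begin

lemma subring_struct_simps[simp]:
  "carrier (subring_struct A) = A" "mult (subring_struct A) = (*)"
  "one (subring_struct A) = 1" "zero (subring_struct A) = 0" "add (subring_struct A) = (+)"
  by (simp_all add: subring_struct_def)

lemma ring_sub:
  assumes "0 \<in> A" "1 \<in> A" "\<And>x y. x \<in> A \<Longrightarrow> y \<in> A \<Longrightarrow> x + y \<in> A"
    "\<And>x y. x \<in> A \<Longrightarrow> y \<in> A \<Longrightarrow> x * y \<in> A" "\<And>x. x \<in> A \<Longrightarrow> - x \<in> A"
  shows "ring (subring_struct A)"
proof (rule ringI)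
  show "abelian_group (subring_struct A)"
    by (rule abelian_groupI) (auto simp: assms intro!: bexI[of _ "- _"])
  show "monoid (subring_struct A)"
    by (rule monoidI) (auto simp: assms)
qed (auto simp: algebra_simps)

lemma ideal_sub:
  assumes "ring (subring_struct A)" "N \<subseteq> A" "0 \<in> N"
    "\<And>x y. x \<in> N \<Longrightarrow> y \<in> N \<Longrightarrow> x + y \<in> N"
    "\<And>x. x \<in> N \<Longrightarrow> - x \<in> N"
    "\<And>x y. x \<in> A \<Longrightarrow> y \<in> N \<Longrightarrow> x * y \<in> N"
  shows "ideal N (subring_struct A)"
proof (rule idealI)
  show "subgroup N (add_monoid (subring_struct A))"
  proof
    interpret ring "subring_struct A" by fact
    fix x assume x: "x \<in> N"
    have "x \<in> A" "- x \<in> A" using x assms(2,5) by auto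
    then have "\<ominus>\<^bsub>subring_struct A\<^esub> x = - x"
      by (intro minus_equality) auto
    then have "inv\<^bsub>add_monoid (subring_struct A)\<^esub> x = - x"
      by (simp add: a_inv_def)
    then show "inv\<^bsub>add_monoid (subring_struct A)\<^esub> x \<in> N" using x assms by simp
  qed (use assms in auto)
next
  fix a x assume "a \<in> N" "x \<in> carrier (subring_struct A)"
  then show "x \<otimes>\<^bsub>subring_struct A\<^esub> a \<in> N" "a \<otimes>\<^bsub>subring_struct A\<^esub> x \<in> N"
    using assms(6) by (auto, metis mult.commute)+
qed (fact assms(1))

lemma rcos_sub: "N +>\<^bsub>subring_struct A\<^esub> x = (\<lambda>h. h + x) ` N"
  by (auto simp: a_r_coset_def r_coset_def)

lemma quot_iso:
  assumes R: "ring (subring_struct A)" and I: "ideal N (subring_struct A)"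
    and ints: "\<And>k. of_int k \<in> A"
    and surj: "\<And>x. x \<in> A \<Longrightarrow> \<exists>k. x - of_int k \<in> N"
    and ker: "\<And>k. (of_int k \<in> N) = (c dvd k)"
  shows "subring_struct A Quot N \<simeq> ZFact c"
proof -
  let ?S = "subring_struct A Quot N"
  let ?h = "\<lambda>k::int. N +>\<^bsub>subring_struct A\<^esub> (of_int k :: complex)"
  interpret ideal N "subring_struct A" by fact
  have NA: "N \<subseteq> A" using a_subset by simp
  have N0: "0 \<in> N" using additive_subgroup.zero_closed[OF additive_subgroup_axioms] by simp
  have Nadd: "x + y \<in> N" if "x \<in> N" "y \<in> N" for x y
    using additive_subgroup.a_closed[OF additive_subgroup_axioms] that by simp
  have Nneg: "- x \<in> N" if "x \<in> N" for x
    using I_l_closed[OF that, of "of_int (-1)"] ints[of "-1"] by simp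
  have hom1: "(\<lambda>k::int. of_int k :: complex) \<in> ring_hom \<Z> (subring_struct A)"
    by (rule ring_hom_memI) (auto simp: ints)
  have hom: "?h \<in> ring_hom \<Z> ?S"
    using ring_hom_trans[OF hom1 rcos_ring_hom] by (simp add: comp_def)
  have rhr: "ring_hom_ring \<Z> ?S ?h"
    by (rule ring_hom_ringI2[OF int.ring_axioms quotient_is_ring hom])
  have img: "?h ` carrier \<Z> = carrier ?S"
  proof
    show "?h ` carrier \<Z> \<subseteq> carrier ?S"
      using ring_hom_closed[OF hom] by auto
    show "carrier ?S \<subseteq> ?h ` carrier \<Z>"
    proof
      fix X assume "X \<in> carrier ?S"
      then obtain x where x: "x \<in> A" "X = N +>\<^bsub>subring_struct A\<^esub> x"
        by (auto simp: FactRing_def A_RCOSETS_def RCOSETS_def a_r_coset_def)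
      obtain k where k: "x - of_int k \<in> N" using surj[OF x(1)] by blast
      have "(\<lambda>h. h + x) ` N = (\<lambda>h. h + of_int k) ` N"
      proof (intro equalityI subsetI)
        fix y assume "y \<in> (\<lambda>h. h + x) ` N"
        then obtain h where "h \<in> N" "y = h + x" by auto
        then show "y \<in> (\<lambda>h. h + of_int k) ` N"
          using Nadd[OF \<open>h \<in> N\<close> k] by (auto intro!: image_eqI[of _ _ "h + (x - of_int k)"])
      next
        fix y assume "y \<in> (\<lambda>h. h + of_int k) ` N"
        then obtain h where "h \<in> N" "y = h + of_int k" by auto
        then show "y \<in> (\<lambda>h. h + x) ` N"
          using Nadd[OF \<open>h \<in> N\<close> Nneg[OF k]] by (intro image_eqI[of _ _ "h + - (x - of_int k)"]) auto
      qed
      then show "X \<in> ?h ` carrier \<Z>" using x by (auto simp: rcos_sub)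
    qed
  qed
  have kerZ: "a_kernel \<Z> ?S ?h = Idl\<^bsub>\<Z>\<^esub> {c}"
  proof -
    have "?h k = N \<longleftrightarrow> c dvd k" for k
    proof
      assume "?h k = N"
      then have "0 + of_int k \<in> N" using N0 by (metis image_eqI rcos_sub)
      then show "c dvd k" using ker by simp
    next
      assume "c dvd k"
      then have kN: "of_int k \<in> N" using ker by simp
      show "?h k = N" unfolding rcos_sub
      proof (intro equalityI subsetI)
        fix y assume "y \<in> (\<lambda>h. h + of_int k) ` N"
        then show "y \<in> N" using Nadd kN by auto
      next
        fix y assume "y \<in> N"
        then show "y \<in> (\<lambda>h. h + of_int k) ` N"
          using Nadd[OF \<open>y \<in> N\<close> Nneg[OF kN]] by (intro image_eqI[of _ _ "y + - of_int k"]) auto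
      qed
    qed
    then show ?thesis
      by (auto simp: a_kernel_def' int_Idl FactRing_def dvd_def mult.commute)
  qed
  have "ZFact c \<simeq> ?S"
    using ring_hom_ring.FactRing_iso[OF rhr img] by (simp add: ZFact_def kerZ)
  then show ?thesis
    by (rule ring_iso_sym[OF cring.axioms(1)[OF ZFact_is_cring]])
qed


lemma mpi_add: "map_poly (of_int :: int \<Rightarrow> 'a::comm_ring_1) (p + q) = map_poly of_int p + map_poly of_int q"
  by (simp add: poly_eq_iff coeff_map_poly)
lemma mpi_minus: "map_poly (of_int :: int \<Rightarrow> 'a::comm_ring_1) (- p) = - map_poly of_int p"
  by (simp add: poly_eq_iff coeff_map_poly)
lemma mpi_diff: "map_poly (of_int :: int \<Rightarrow> 'a::comm_ring_1) (p - q) = map_poly of_int p - map_poly of_int q"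
  by (simp add: poly_eq_iff coeff_map_poly)
lemma mpi_smult: "map_poly (of_int :: int \<Rightarrow> 'a::comm_ring_1) (smult c p) = smult (of_int c) (map_poly of_int p)"
  by (simp add: poly_eq_iff coeff_map_poly)
lemma mpi_mult: "map_poly (of_int :: int \<Rightarrow> 'a::comm_ring_1) (p * q) = map_poly of_int p * map_poly of_int q"
  by (induct p) (simp_all add: map_poly_pCons mpi_add mpi_smult)

definition ev :: "complex \<Rightarrow> int poly \<Rightarrow> complex" where
  "ev x p = poly (map_poly of_int p) x"

lemma ev_simps[simp]:
  "ev x (p + q) = ev x p + ev x q" "ev x (p - q) = ev x p - ev x q" "ev x (- p) = - ev x p"
  "ev x (p * q) = ev x p * ev x q" "ev x (smult c p) = of_int c * ev x p"
  "ev x (monom c k) = of_int c * x ^ k" "ev x [:c:] = of_int c" "ev x 0 = 0" "ev x 1 = 1"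
  by (simp_all add: ev_def mpi_add mpi_diff mpi_minus mpi_mult mpi_smult map_poly_monom poly_monom map_poly_pCons)

lemma ev_sum: "ev x (\<Sum>i\<in>S. g i) = (\<Sum>i\<in>S. ev x (g i))"
  by (induct S rule: infinite_finite_induct) auto

lemma ev_coeffs: assumes "\<forall>i\<ge>m. coeff r i = 0"
  shows "ev x r = (\<Sum>i<m. of_int (coeff r i) * x ^ i)"
proof -
  have "ev x r = (\<Sum>i\<le>degree r. of_int (coeff r i) * x ^ i)"
    by (simp add: ev_def poly_altdef coeff_map_poly degree_map_poly)
  also have "\<dots> = (\<Sum>i<m. of_int (coeff r i) * x ^ i)"
  proof (cases "r = 0")
    case False
    then have "degree r < m" using assms
      by (metis leading_coeff_0_iff not_le_imp_less)
    then show ?thesis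
      by (intro sum.mono_neutral_cong_left) (auto simp: assms le_degree)
  qed simp
  finally show ?thesis .
qed

lemma coeff_sum_monom: "coeff (\<Sum>i<m. monom (c i) i) k = (if k < m then c k else 0)"
  by (simp add: coeff_sum coeff_monom)

lemma ev_sum_monom: "ev x (\<Sum>i<m. monom (c i) i) = (\<Sum>i<m. of_int (c i) * x ^ i)"
  by (simp add: ev_sum)

definition zmod :: "complex set \<Rightarrow> bool" where
  "zmod S \<longleftrightarrow> 0 \<in> S \<and> (\<forall>x\<in>S. \<forall>y\<in>S. x + y \<in> S) \<and> (\<forall>c x. x \<in> S \<longrightarrow> of_int c * x \<in> S)"

lemma zmodD:
  assumes "zmod S"
  shows "0 \<in> S" "x \<in> S \<Longrightarrow> y \<in> S \<Longrightarrow> x + y \<in> S" "x \<in> S \<Longrightarrow> of_int c * x \<in> S"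
    "x \<in> S \<Longrightarrow> - x \<in> S" "x \<in> S \<Longrightarrow> y \<in> S \<Longrightarrow> x - y \<in> S"
proof -
  show "0 \<in> S" "x \<in> S \<Longrightarrow> y \<in> S \<Longrightarrow> x + y \<in> S" "x \<in> S \<Longrightarrow> of_int c * x \<in> S"
    using assms by (auto simp: zmod_def)
  show neg: "- x \<in> S" if "x \<in> S" for x
    using assms that unfolding zmod_def by (metis mult_minus1 of_int_1 of_int_minus)
  show "x \<in> S \<Longrightarrow> y \<in> S \<Longrightarrow> x - y \<in> S"
    using assms neg unfolding zmod_def by (metis diff_conv_add_uminus)
qed

lemma zmod_sum: "zmod S \<Longrightarrow> (\<And>i. i \<in> T \<Longrightarrow> h i \<in> S) \<Longrightarrow> sum h T \<in> S"
  by (induct T rule: infinite_finite_induct) (auto intro: zmodD)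

lemma zmod_zspan: "zmod (zspan g m)"
  unfolding zmod_def zspan_def
proof (intro conjI ballI allI impI)
  show "0 \<in> {\<Sum>j<m. of_int (c j) * g j |c. True}"
    by (rule CollectI, rule exI[of _ "\<lambda>_. 0"]) simp
next
  fix x y assume "x \<in> {\<Sum>j<m. of_int (c j) * g j |c. True}" "y \<in> {\<Sum>j<m. of_int (c j) * g j |c. True}"
  then obtain c d where "x = (\<Sum>j<m. of_int (c j) * g j)" "y = (\<Sum>j<m. of_int (d j) * g j)" by auto
  then show "x + y \<in> {\<Sum>j<m. of_int (c j) * g j |c. True}"
    by (intro CollectI exI[of _ "\<lambda>j. c j + d j"]) (simp add: sum.distrib algebra_simps)
next
  fix k x assume "x \<in> {\<Sum>j<m. of_int (c j) * g j |c. True}"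
  then obtain c where "x = (\<Sum>j<m. of_int (c j) * g j)" by auto
  then show "of_int k * x \<in> {\<Sum>j<m. of_int (c j) * g j |c. True}"
    by (intro CollectI exI[of _ "\<lambda>j. k * c j"]) (simp add: sum_distrib_left algebra_simps)
qed

lemma zspan_gen: assumes "i < m" shows "g i \<in> zspan g m"
proof -
  have "(\<Sum>j<m. of_int (if j = i then 1 else 0) * g j) = (\<Sum>j<m. if j = i then g j else 0)"
    by (rule sum.cong) auto
  also have "\<dots> = g i" using assms by (simp add: sum.delta)
  finally show ?thesis unfolding zspan_def by (intro CollectI exI[of _ "\<lambda>j. if j = i then 1 else 0"]) simp
qed

lemma zspan_sub: assumes "zmod S" "\<And>i. i < m \<Longrightarrow> g i \<in> S" shows "zspan g m \<subseteq> S"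
  unfolding zspan_def using assms by (auto intro!: zmod_sum zmodD(3))

lemma zspan_mono: "m \<le> m' \<Longrightarrow> zspan g m \<subseteq> zspan g m'"
  by (rule zspan_sub[OF zmod_zspan]) (auto intro: zspan_gen)

lemma zmod_setadd: "zmod S \<Longrightarrow> zmod T \<Longrightarrow> zmod (setadd S T)"
  unfolding zmod_def setadd_def
  apply (intro conjI)
    apply (metis (mono_tags, lifting) CollectI add_0)
   apply (smt (verit, ccfv_threshold) add.assoc add.commute mem_Collect_eq)
  by (smt (verit) distrib_left mem_Collect_eq)

lemma setadd_I: "x \<in> S \<Longrightarrow> y \<in> T \<Longrightarrow> x + y \<in> setadd S T"
  by (auto simp: setadd_def)

lemma setadd_E: "z \<in> setadd S T \<Longrightarrow> (\<And>x y. x \<in> S \<Longrightarrow> y \<in> T \<Longrightarrow> z = x + y \<Longrightarrow> P) \<Longrightarrow> P"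
  by (auto simp: setadd_def)

lemma zmod_Zset: "zmod Zset"
  unfolding zmod_def Zset_def by (auto, metis of_int_add rangeI, metis of_int_mult rangeI)

lemma zmod_image: "zmod S \<Longrightarrow> zmod ((\<lambda>x. c * x) ` S)"
  unfolding zmod_def
  apply (intro conjI)
    apply (metis image_eqI mult_zero_right)
   apply (smt (verit) distrib_left image_iff)
  by (smt (verit) image_iff mult.left_commute)

lemma zmod_Int: "zmod S \<Longrightarrow> zmod T \<Longrightarrow> zmod (S \<inter> T)"
  unfolding zmod_def by auto

lemma zmod_colon: "zmod K \<Longrightarrow> zmod S \<Longrightarrow> zmod (colon K S T)"
  unfolding zmod_def colon_def by (auto simp: distrib_right mult.assoc)

lemma Zset_sub: "zmod S \<Longrightarrow> 1 \<in> S \<Longrightarrow> Zset \<subseteq> S"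
  unfolding Zset_def using zmodD(3)[of S 1] by auto

lemma Zset_of_int[simp]: "of_int k \<in> Zset"
  by (simp add: Zset_def)

lemma W_iff: "y \<in> zspan (\<lambda>i. x ^ i) m \<longleftrightarrow> (\<exists>r. (\<forall>i\<ge>m. coeff r i = 0) \<and> ev x r = y)"
proof
  assume "y \<in> zspan (\<lambda>i. x ^ i) m"
  then obtain c where c: "y = (\<Sum>j<m. of_int (c j) * x ^ j)" by (auto simp: zspan_def)
  show "\<exists>r. (\<forall>i\<ge>m. coeff r i = 0) \<and> ev x r = y"
    by (rule exI[of _ "\<Sum>i<m. monom (c i) i"]) (simp add: coeff_sum_monom ev_sum_monom c)
next
  assume "\<exists>r. (\<forall>i\<ge>m. coeff r i = 0) \<and> ev x r = y"
  then obtain r where "\<forall>i\<ge>m. coeff r i = 0" "ev x r = y" by blast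
  then show "y \<in> zspan (\<lambda>i. x ^ i) m"
    using ev_coeffs[of m r x] by (auto simp: zspan_def)
qed

lemma Zadj_ev: "Zadj x = range (ev x)"
  by (auto simp: Zadj_def ev_def)

lemma Zadj_iff: "y \<in> Zadj x \<longleftrightarrow> (\<exists>m. y \<in> zspan (\<lambda>i. x ^ i) m)"
proof
  assume "y \<in> Zadj x"
  then obtain r where r: "y = ev x r" by (auto simp: Zadj_ev)
  show "\<exists>m. y \<in> zspan (\<lambda>i. x ^ i) m"
    by (rule exI[of _ "Suc (degree r)"]) (auto simp: W_iff r intro!: exI[of _ r] coeff_eq_0)
next
  assume "\<exists>m. y \<in> zspan (\<lambda>i. x ^ i) m"
  then show "y \<in> Zadj x" by (auto simp: W_iff Zadj_ev)
qed

lemma Zadj_closed: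
  "0 \<in> Zadj x" "1 \<in> Zadj x" "x \<in> Zadj x" "of_int k \<in> Zadj x"
  "a \<in> Zadj x \<Longrightarrow> b \<in> Zadj x \<Longrightarrow> a + b \<in> Zadj x"
  "a \<in> Zadj x \<Longrightarrow> b \<in> Zadj x \<Longrightarrow> a * b \<in> Zadj x"
  "a \<in> Zadj x \<Longrightarrow> - a \<in> Zadj x"
  "a \<in> Zadj x \<Longrightarrow> b \<in> Zadj x \<Longrightarrow> a - b \<in> Zadj x"
proof -
  have "ev x (monom 1 1) = x" by simp
  then show "x \<in> Zadj x" unfolding Zadj_ev by (metis rangeI)
qed (unfold Zadj_ev,
   auto intro: image_eqI[of _ _ 0] image_eqI[of _ _ 1] image_eqI[of _ _ "monom 1 1"]
     image_eqI[of _ _ "[:k:]"] simp del: ev_simps simp: ev_simps[symmetric])+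

lemma zmod_Zadj: "zmod (Zadj x)"
  unfolding zmod_def using Zadj_closed by auto

lemma mpr_add: "map_poly (of_rat :: rat \<Rightarrow> complex) (p + q) = map_poly of_rat p + map_poly of_rat q"
  by (simp add: poly_eq_iff coeff_map_poly of_rat_add)
lemma mpr_smult: "map_poly (of_rat :: rat \<Rightarrow> complex) (smult c p) = smult (of_rat c) (map_poly of_rat p)"
  by (simp add: poly_eq_iff coeff_map_poly of_rat_mult)
lemma mpr_mult: "map_poly (of_rat :: rat \<Rightarrow> complex) (p * q) = map_poly of_rat p * map_poly of_rat q"
  by (induct p) (simp_all add: map_poly_pCons mpr_add mpr_smult)
lemma mpr_minus: "map_poly (of_rat :: rat \<Rightarrow> complex) (- p) = - map_poly of_rat p"
  by (simp add: poly_eq_iff coeff_map_poly of_rat_minus)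

lemma nf_I: "poly (map_poly of_rat q) x \<noteq> 0 \<Longrightarrow> poly (map_poly of_rat p) x / poly (map_poly of_rat q) x \<in> numfield x"
  unfolding numfield_def by blast

lemma nf_E: "y \<in> numfield x \<Longrightarrow> (\<And>p q. poly (map_poly of_rat q) x \<noteq> 0 \<Longrightarrow> y = poly (map_poly of_rat p) x / poly (map_poly of_rat q) x \<Longrightarrow> P) \<Longrightarrow> P"
  unfolding numfield_def by blast

lemma nf_poly: "poly (map_poly of_rat p) x \<in> numfield x"
  using nf_I[of 1 x p] by simp

lemma Zadj_nf: "Zadj x \<subseteq> numfield x"
proof
  fix y assume "y \<in> Zadj x"
  then obtain r where "y = poly (map_poly of_int r) x" by (auto simp: Zadj_def)
  also have "map_poly of_int r = map_poly (of_rat :: rat \<Rightarrow> complex) (map_poly of_int r)"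
    by (simp add: map_poly_map_poly comp_def)
  finally show "y \<in> numfield x" using nf_poly by simp
qed

lemma nf_add: assumes "y \<in> numfield x" "z \<in> numfield x" shows "y + z \<in> numfield x"
proof -
  obtain p q where pq: "poly (map_poly of_rat q) x \<noteq> 0" "y = poly (map_poly of_rat p) x / poly (map_poly of_rat q) x"
    using assms(1) by (rule nf_E)
  obtain p' q' where pq': "poly (map_poly of_rat q') x \<noteq> 0" "z = poly (map_poly of_rat p') x / poly (map_poly of_rat q') x"
    using assms(2) by (rule nf_E)
  have "y + z = poly (map_poly of_rat (p * q' + p' * q)) x / poly (map_poly of_rat (q * q')) x"
    unfolding pq(2) pq'(2) using pq(1) pq'(1) by (simp add: mpr_add mpr_mult field_simps)
  moreover have "poly (map_poly of_rat (q * q')) x \<noteq> 0" using pq pq' by (simp add: mpr_mult)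
  ultimately show ?thesis using nf_I by simp
qed

lemma nf_mult: assumes "y \<in> numfield x" "z \<in> numfield x" shows "y * z \<in> numfield x"
proof -
  obtain p q where pq: "poly (map_poly of_rat q) x \<noteq> 0" "y = poly (map_poly of_rat p) x / poly (map_poly of_rat q) x"
    using assms(1) by (rule nf_E)
  obtain p' q' where pq': "poly (map_poly of_rat q') x \<noteq> 0" "z = poly (map_poly of_rat p') x / poly (map_poly of_rat q') x"
    using assms(2) by (rule nf_E)
  have "y * z = poly (map_poly of_rat (p * p')) x / poly (map_poly of_rat (q * q')) x"
    unfolding pq(2) pq'(2) using pq(1) pq'(1) by (simp add: mpr_mult field_simps)
  moreover have "poly (map_poly of_rat (q * q')) x \<noteq> 0" using pq pq' by (simp add: mpr_mult)
  ultimately show ?thesis using nf_I by simp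
qed

lemma nf_inverse: assumes "x \<noteq> 0" shows "inverse x \<in> numfield x"
proof -
  have "inverse x = poly (map_poly of_rat 1) x / poly (map_poly of_rat [:0,1:]) x"
    by (simp add: map_poly_pCons field_simps)
  moreover have "poly (map_poly of_rat [:0,1:]) x \<noteq> 0" using assms by (simp add: map_poly_pCons)
  ultimately show ?thesis using nf_I[of "[:0,1:]" x 1] by simp
qed

lemma nf_Zadj: "a \<in> Zadj x \<Longrightarrow> a \<in> numfield x" using Zadj_nf by blast

lemma zmod_nf: "zmod (numfield x)"
  unfolding zmod_def using nf_add nf_mult nf_Zadj Zadj_closed by metis


locale ctx =
  fixes f :: "int poly" and \<gamma> :: complex and n :: nat
  assumes deg: "degree f = n" and n2: "n \<ge> 2"
    and irr: "irreducible f"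
    and root: "poly (map_poly of_int f) \<gamma> = 0"
begin

lemma root': "ev \<gamma> f = 0" using root by (simp add: ev_def)

lemma f_nz: "f \<noteq> 0" using irr by auto

lemma gamma_nz: "\<gamma> \<noteq> 0"
proof
  assume "\<gamma> = 0"
  then have "poly f 0 = 0" using root' by (simp add: ev_def poly_0_coeff_0 coeff_map_poly)
  then have "[:0, 1:] dvd f" using dvd_iff_poly_eq_0[of 0 f] by simp
  then obtain g where g: "f = [:0,1:] * g" by (elim dvdE)
  have "\<not> is_unit ([:0,1:] :: int poly)" by (auto simp: is_unit_poly_iff)
  then have "is_unit g" using irr g by (metis irreducibleD)
  then have "degree g = 0" by (auto simp: is_unit_poly_iff)
  then have "degree f \<le> 1" using g degree_mult_le[of "[:0,1:]" g] by simp
  then show False using deg n2 by simp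
qed

lemma prime_f: "prime_elem f"
  using irr by (rule irreducible_imp_prime_elem)

lemma G: assumes "ev \<gamma> g = 0" shows "f dvd g"
proof -
  obtain h where h: "h \<noteq> 0 \<and> ev \<gamma> h = 0" and hmin: "\<forall>y. y \<noteq> 0 \<and> ev \<gamma> y = 0 \<longrightarrow> degree h \<le> degree y"
    using ex_has_least_nat[of "\<lambda>h. h \<noteq> 0 \<and> ev \<gamma> h = 0" f degree] f_nz root' by blast
  have key: "\<exists>b q. b \<noteq> 0 \<and> smult b g' = h * q" if "ev \<gamma> g' = 0" for g'
  proof -
    obtain b q where bq: "b \<noteq> 0" "smult b g' = h * q + pseudo_mod g' h"
      using pseudo_mod(1)[of h g'] h by blast
    have r: "pseudo_mod g' h = 0 \<or> degree (pseudo_mod g' h) < degree h"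
      using pseudo_mod(2)[of h g'] h by blast
    have "ev \<gamma> (pseudo_mod g' h) = 0"
    proof -
      have "ev \<gamma> (smult b g') = ev \<gamma> (h * q + pseudo_mod g' h)" using bq by simp
      then show ?thesis using that h by simp
    qed
    then have "pseudo_mod g' h = 0" using r hmin by fastforce
    then show ?thesis using bq by auto
  qed
  obtain a q where aq: "a \<noteq> 0" "smult a f = h * q" using key[OF root'] by blast
  have "f dvd h * q" unfolding aq[symmetric] by (rule dvd_smult) simp
  then have "f dvd h \<or> f dvd q" using prime_f by (simp add: prime_elem_dvd_mult_iff)
  moreover have "\<not> f dvd q"
  proof
    assume "f dvd q"
    then obtain t where t: "q = f * t" by (elim dvdE)
    have "[:a:] * f = (h * t) * f" using aq t by (simp add: ac_simps)
    then have "[:a:] = h * t" using f_nz mult_right_cancel by blast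
    then have "h dvd [:a:]" by simp
    then have "degree h = 0" using dvd_imp_degree_le[of h "[:a:]"] aq(1) by simp
    then obtain c where "h = [:c:]" by (metis degree_eq_zeroE)
    then show False using h by simp
  qed
  ultimately have fh: "f dvd h" by blast
  obtain b q' where bq: "b \<noteq> 0" "smult b g = h * q'" using key[OF assms] by blast
  have "[:b:] * g = h * q'" using bq by simp
  then have "f dvd [:b:] * g" using fh by (metis dvd_mult2)
  then have "f dvd [:b:] \<or> f dvd g" using prime_f prime_elem_dvd_mult_iff by blast
  moreover have "\<not> f dvd [:b:]"
  proof
    assume "f dvd [:b:]"
    then have "degree f = 0" using dvd_imp_degree_le[of f "[:b:]"] bq(1) by simp
    then show False using deg n2 by simp
  qed
  ultimately show ?thesis by blast
qed

lemma IND: assumes "\<forall>i\<ge>n. coeff r i = 0" "ev \<gamma> r = 0" shows "r = 0"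
proof (rule ccontr)
  assume "r \<noteq> 0"
  then have "degree f \<le> degree r" using G[OF assms(2)] dvd_imp_degree_le by blast
  moreover have "degree r < n" using assms(1) \<open>r \<noteq> 0\<close> by (metis leading_coeff_0_iff not_le_imp_less)
  ultimately show False using deg by simp
qed

lemma DEGN: assumes "\<forall>i>n. coeff g i = 0" "ev \<gamma> g = 0" shows "\<exists>t. g = smult t f"
proof (cases "g = 0")
  case True then show ?thesis by (auto intro: exI[of _ 0])
next
  case False
  obtain h where h: "g = f * h" using G[OF assms(2)] by (elim dvdE)
  then have "h \<noteq> 0" using False by auto
  have "degree g \<le> n" using assms(1) by (simp add: degree_le)
  then have "degree h = 0" using h \<open>h \<noteq> 0\<close> f_nz deg by (simp add: degree_mult_eq)
  then obtain t where "h = [:t:]" by (metis degree_eq_zeroE)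
  then show ?thesis using h by (auto intro: exI[of _ t])
qed

end

lemma pow_Zadj: "x ^ k \<in> Zadj x"
  unfolding Zadj_iff by (rule exI[of _ "Suc k"], rule zspan_gen) simp

lemma W_pow: "k < m \<Longrightarrow> x ^ k \<in> zspan (\<lambda>i. x ^ i) m"
  by (rule zspan_gen)

context ctx
begin

definition pp :: "nat \<Rightarrow> complex" where
  "pp j = (\<Sum>k\<le>j. of_int (coeff f (n - k)) * \<gamma> ^ (j - k))"
definition qq :: "nat \<Rightarrow> complex" where
  "qq j = (\<Sum>k\<le>j. of_int (coeff f (j - k)) * inverse \<gamma> ^ k)"

abbreviation "W m \<equiv> zspan (\<lambda>i. \<gamma> ^ i) m"
abbreviation "F i \<equiv> of_int (coeff f i) * \<gamma> ^ i"

lemma fsum: "(\<Sum>i\<le>n. F i) = 0"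
proof -
  have "ev \<gamma> f = (\<Sum>i<Suc n. F i)"
    by (rule ev_coeffs) (auto simp: deg coeff_eq_0)
  then show ?thesis using root' by (simp add: lessThan_Suc_atMost)
qed

lemma reflect_sum: fixes g :: "nat \<Rightarrow> complex" shows "(\<Sum>k\<le>m. g (m - k)) = (\<Sum>k\<le>m. g k)"
  using sum.atLeastAtMost_rev[of g 0 m] by (simp add: atLeast0AtMost)

lemma P_eq: "j \<le> n \<Longrightarrow> \<gamma> ^ (n - j) * pp j = (\<Sum>k\<le>j. F (n - k))"
  unfolding pp_def sum_distrib_left
  by (rule sum.cong) (auto simp: power_add[symmetric] algebra_simps)

lemma Q_eq: "\<gamma> ^ m * qq m = (\<Sum>k\<le>m. F (m - k))"
  unfolding qq_def sum_distrib_left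
proof (rule sum.cong)
  fix k assume "k \<in> {..m}"
  then have "\<gamma> ^ m = \<gamma> ^ (m - k) * \<gamma> ^ k" by (simp add: power_add[symmetric])
  then show "\<gamma> ^ m * (of_int (coeff f (m - k)) * inverse \<gamma> ^ k) = F (m - k)"
    using gamma_nz by (simp add: field_simps power_inverse)
qed simp

lemma pq_rel: assumes "j < n" shows "\<gamma> * pp j = - qq (n - 1 - j)"
proof -
  define m where "m = n - 1 - j"
  have nm: "n = m + (j + 1)" using assms m_def by simp
  have "(\<Sum>i\<le>n. F i) = (\<Sum>i\<in>{0..m}. F i) + (\<Sum>i\<in>{m+1..m+(j+1)}. F i)"
    unfolding nm atLeast0AtMost[symmetric] by (rule sum.ub_add_nat) simp
  moreover have "(\<Sum>i\<in>{0..m}. F i) = \<gamma> ^ m * qq m"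
    using reflect_sum[of "\<lambda>i. F i" m] Q_eq[of m] by (simp add: atLeast0AtMost)
  moreover have "(\<Sum>i\<in>{m+1..m+(j+1)}. F i) = (\<Sum>k\<le>j. F (n - k))"
    by (rule sum.reindex_bij_witness[of _ "\<lambda>i. n - i" "\<lambda>k. n - k"]) (auto simp: nm)
  ultimately have "\<gamma> ^ m * qq m + \<gamma> ^ (n - j) * pp j = 0"
    using fsum P_eq[of j] assms by simp
  moreover have "\<gamma> ^ (n - j) = \<gamma> ^ m * \<gamma>" by (simp add: nm)
  ultimately have "\<gamma> ^ m * (qq m + \<gamma> * pp j) = 0" by (simp add: algebra_simps)
  then show ?thesis using gamma_nz m_def by (simp add: add_eq_0_iff)
qed

lemma pp_rec: "pp (Suc j) = \<gamma> * pp j + of_int (coeff f (n - Suc j))"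
  unfolding pp_def sum_distrib_left
  by (simp add: Suc_diff_le algebra_simps)

lemma pp0: "pp 0 = of_int (coeff f n)" by (simp add: pp_def)
lemma qq0: "qq 0 = of_int (coeff f 0)" by (simp add: qq_def)

lemma pp_Zadj: "pp j \<in> Zadj \<gamma>"
  unfolding pp_def by (rule zmod_sum[OF zmod_Zadj]) (auto intro: Zadj_closed pow_Zadj)

lemma qq_Zadj: "qq j \<in> Zadj (inverse \<gamma>)"
  unfolding qq_def by (rule zmod_sum[OF zmod_Zadj]) (auto intro: Zadj_closed pow_Zadj)

lemma pp_W: "pp j \<in> W (Suc j)"
  unfolding pp_def by (rule zmod_sum[OF zmod_zspan]) (auto intro!: zmodD(3)[OF zmod_zspan] W_pow)

lemma pp_top: "pp j - of_int (coeff f n) * \<gamma> ^ j \<in> W j"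
proof (cases j)
  case 0 then show ?thesis by (simp add: pp0 zmodD(1)[OF zmod_zspan])
next
  case (Suc j')
  have "pp j - of_int (coeff f n) * \<gamma> ^ j = (\<Sum>k\<le>j'. of_int (coeff f (n - Suc k)) * \<gamma> ^ (j - Suc k))"
    unfolding pp_def Suc sum.atMost_Suc_shift by simp
  also have "\<dots> \<in> W j"
    by (rule zmod_sum[OF zmod_zspan]) (auto intro!: zmodD(3)[OF zmod_zspan] W_pow simp: Suc)
  finally show ?thesis .
qed

end

lemma poly_split: "\<exists>h0 h1. h = h0 + monom 1 m * h1 \<and> (\<forall>i\<ge>m. coeff h0 i = (0::int))"
proof (induct m)
  case 0 show ?case by (rule exI[of _ 0], rule exI[of _ h]) (simp add: monom_0)
next
  case (Suc m)
  then obtain h0 h1 where h: "h = h0 + monom 1 m * h1" "\<forall>i\<ge>m. coeff h0 i = 0" by blast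
  obtain b h1' where b: "h1 = pCons b h1'" by (cases h1)
  have e: "monom 1 m * pCons b h1' = monom b m + monom 1 (Suc m) * h1'"
    by (auto simp: poly_eq_iff coeff_monom_mult coeff_pCons coeff_monom split: nat.split)
  show ?case
    by (rule exI[of _ "h0 + monom b m"], rule exI[of _ h1'])
       (use h b e in \<open>auto simp: coeff_monom\<close>)
qed

lemma zmod_mulpre: "zmod S \<Longrightarrow> zmod {y. x * y \<in> S}"
  unfolding zmod_def by (auto simp: distrib_left) (metis mult.left_commute)

lemma coeff_mult_zero: assumes "\<forall>i\<ge>m. coeff h i = 0" "j \<ge> degree (g::int poly) + m"
  shows "coeff (g * h) j = 0"
proof (cases "h = 0")
  case False
  then have "degree h < m" using assms(1) by (metis leading_coeff_0_iff not_le_imp_less)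
  then have "degree (g * h) < j" using degree_mult_le[of g h] assms(2) by linarith
  then show ?thesis by (rule coeff_eq_0)
qed simp

context ctx
begin

abbreviation "M \<equiv> W n"
abbreviation "D \<equiv> zspan pp n"
abbreviation "N \<equiv> zspan qq n"
abbreviation "R \<equiv> setadd Zset D"
abbreviation "K \<equiv> numfield \<gamma>"

lemma W_mult_pow: "y \<in> W m \<Longrightarrow> \<gamma> ^ k * y \<in> W (m + k)"
proof -
  have "W m \<subseteq> {y. \<gamma> ^ k * y \<in> W (m + k)}"
  proof (rule zspan_sub)
    show "zmod {y. \<gamma> ^ k * y \<in> W (m + k)}"
      unfolding zmod_def using zmodD[OF zmod_zspan] by (auto simp: distrib_left mult.left_commute)
    show "\<gamma> ^ i \<in> {y. \<gamma> ^ k * y \<in> W (m + k)}" if "i < m" for i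
      using that by (auto simp: power_add[symmetric] intro!: W_pow)
  qed
  then show "y \<in> W m \<Longrightarrow> \<gamma> ^ k * y \<in> W (m + k)" by blast
qed

lemma L: assumes y: "y \<in> Zadj \<gamma>" and ym: "\<gamma> ^ m * y \<in> W (n + m)" shows "y \<in> M"
proof -
  obtain c where c: "y = ev \<gamma> c" using y by (auto simp: Zadj_ev)
  obtain e where e: "\<forall>i\<ge>n+m. coeff e i = 0" "ev \<gamma> e = \<gamma> ^ m * y" using ym W_iff by blast
  define g where "g = monom 1 m * c - e"
  have "ev \<gamma> g = 0" using e c by (simp add: g_def)
  then obtain h where h: "g = f * h" using G by (blast elim: dvdE)
  obtain h0 h1 where hs: "h = h0 + monom 1 m * h1" "\<forall>i\<ge>m. coeff h0 i = 0" using poly_split by blast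
  define r where "r = c - f * h1"
  have evr: "ev \<gamma> r = y" using c root' by (simp add: r_def)
  have mr: "monom 1 m * r = f * h0 + e"
    using h hs unfolding r_def g_def by (simp add: algebra_simps)
  have "\<forall>i\<ge>n. coeff r i = 0"
  proof (intro allI impI)
    fix i assume "n \<le> i"
    have "coeff r i = coeff (monom 1 m * r) (i + m)" by (simp add: coeff_monom_mult)
    also have "\<dots> = coeff (f * h0) (i + m) + coeff e (i + m)" by (simp add: mr)
    also have "coeff (f * h0) (i + m) = 0" using coeff_mult_zero[OF hs(2)] \<open>n \<le> i\<close> deg by simp
    also have "coeff e (i + m) = 0" using e(1) \<open>n \<le> i\<close> by simp
    finally show "coeff r i = 0" by simp
  qed
  then show ?thesis using evr W_iff by blast
qed

lemma gamma_K: "\<gamma> \<in> K" using Zadj_closed(3) nf_Zadj by blast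
lemma one_K: "1 \<in> K" using Zadj_closed(2) nf_Zadj by blast
lemma ginv_K: "inverse \<gamma> \<in> K" using nf_inverse gamma_nz by blast

lemma Zset_R: "Zset \<subseteq> R"
  using setadd_I[of _ Zset 0 D] zmodD(1)[OF zmod_zspan] by auto
lemma D_R: "D \<subseteq> R"
  using setadd_I[of 0 Zset _ D] by (auto simp: Zset_def intro: range_eqI[of _ _ 0])
lemma zmod_R: "zmod R" by (intro zmod_setadd zmod_Zset zmod_zspan)
lemma pp_D: "j < n \<Longrightarrow> pp j \<in> D" by (rule zspan_gen)
lemma qq_N: "j < n \<Longrightarrow> qq j \<in> N" by (rule zspan_gen)

lemma C1: "R \<subseteq> Zadj \<gamma> \<inter> Zadj (inverse \<gamma>)"
proof -
  have z: "zmod (Zadj \<gamma> \<inter> Zadj (inverse \<gamma>))" by (intro zmod_Int zmod_Zadj)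
  have "D \<subseteq> Zadj \<gamma> \<inter> Zadj (inverse \<gamma>)"
  proof (rule zspan_sub[OF z])
    fix j assume "j < n"
    have "pp j = - (inverse \<gamma> * qq (n - 1 - j))"
      using pq_rel[OF \<open>j < n\<close>] gamma_nz by (simp add: field_simps)
    then have "pp j \<in> Zadj (inverse \<gamma>)" using Zadj_closed qq_Zadj by metis
    then show "pp j \<in> Zadj \<gamma> \<inter> Zadj (inverse \<gamma>)" using pp_Zadj by blast
  qed
  moreover have "Zset \<subseteq> Zadj \<gamma> \<inter> Zadj (inverse \<gamma>)" using Zadj_closed(4) by (auto simp: Zset_def)
  ultimately show ?thesis
  proof (intro subsetI)
    fix z assume "z \<in> R"
    then obtain u v where "u \<in> Zset" "v \<in> D" "z = u + v" by (elim setadd_E)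
    then show "z \<in> Zadj \<gamma> \<inter> Zadj (inverse \<gamma>)"
      using \<open>D \<subseteq> _\<close> \<open>Zset \<subseteq> _\<close> zmodD(2)[OF z] by blast
  qed
qed

lemma C2: "Zadj \<gamma> \<inter> Zadj (inverse \<gamma>) \<subseteq> colon K M M"
proof
  fix x assume x: "x \<in> Zadj \<gamma> \<inter> Zadj (inverse \<gamma>)"
  obtain m where m: "x \<in> zspan (\<lambda>i. inverse \<gamma> ^ i) m" using x Zadj_iff by blast
  have "M \<subseteq> {y. x * y \<in> M}"
  proof (rule zspan_sub)
    show "zmod {y. x * y \<in> M}" by (intro zmod_mulpre zmod_zspan)
    fix i assume "i < n"
    have "zspan (\<lambda>i. inverse \<gamma> ^ i) m \<subseteq> {z. (\<gamma> ^ m * \<gamma> ^ i) * z \<in> W (n + m)}"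
    proof (rule zspan_sub)
      show "zmod {z. (\<gamma> ^ m * \<gamma> ^ i) * z \<in> W (n + m)}" by (intro zmod_mulpre zmod_zspan)
      fix k assume "k < m"
      have "\<gamma> ^ m * (inverse \<gamma> ^ k * \<gamma> ^ i) = \<gamma> ^ (m - k + i)"
      proof -
        have "\<gamma> ^ m = \<gamma> ^ (m - k) * \<gamma> ^ k" using \<open>k < m\<close> by (simp add: power_add[symmetric])
        then show ?thesis using gamma_nz by (simp add: field_simps power_add power_inverse)
      qed
      then show "inverse \<gamma> ^ k \<in> {z. (\<gamma> ^ m * \<gamma> ^ i) * z \<in> W (n + m)}"
        using \<open>k < m\<close> \<open>i < n\<close> by (auto intro!: W_pow simp: ac_simps)
    qed
    then have "(\<gamma> ^ m * \<gamma> ^ i) * x \<in> W (n + m)" using m by blast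
    then have "\<gamma> ^ m * (x * \<gamma> ^ i) \<in> W (n + m)" by (simp add: ac_simps)
    moreover have "x * \<gamma> ^ i \<in> Zadj \<gamma>" using x pow_Zadj Zadj_closed(6) by blast
    ultimately show "\<gamma> ^ i \<in> {y. x * y \<in> M}" using L by blast
  qed
  moreover have "x \<in> K" using x nf_Zadj by blast
  ultimately show "x \<in> colon K M M" by (auto simp: colon_def)
qed

lemma R_colon: "R \<subseteq> colon K M M" using C1 C2 by blast

lemma one_M: "1 \<in> M" using W_pow[of 0 n \<gamma>] n2 by simp

lemma colon_M: "x \<in> colon K M M \<Longrightarrow> x \<in> M"
  using one_M by (auto simp: colon_def dest: bspec[of _ _ 1])

lemma zmod_colonM: "zmod (colon K M M)" by (intro zmod_colon zmod_nf zmod_zspan)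

lemma C3: "colon K M M \<subseteq> R"
proof -
  have main: "\<forall>x. x \<in> colon K M M \<and> x \<in> W (Suc k) \<longrightarrow> x \<in> R" if "k < n" for k
    using that
  proof (induct k)
    case 0
    have "W 1 \<subseteq> Zset" by (rule zspan_sub[OF zmod_Zset]) (auto simp: Zset_def intro: range_eqI[of _ _ 1])
    then show ?case using Zset_R by auto
  next
    case (Suc k)
    show ?case
    proof (intro allI impI)
      fix x assume x: "x \<in> colon K M M \<and> x \<in> W (Suc (Suc k))"
      obtain c where c: "\<forall>i\<ge>Suc (Suc k). coeff c i = 0" "ev \<gamma> c = x" using x W_iff by blast
      define d where "d = n - Suc k"
      have d: "d < n" "Suc k + d = n" using Suc.prems by (auto simp: d_def)
      have "x * \<gamma> ^ d \<in> M" using x W_pow[OF d(1)] by (auto simp: colon_def)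
      then obtain e where e: "\<forall>i\<ge>n. coeff e i = 0" "ev \<gamma> e = x * \<gamma> ^ d" using W_iff by blast
      define g where "g = monom 1 d * c - e"
      have "\<forall>i>n. coeff g i = 0"
        using c(1) e(1) d by (auto simp: g_def coeff_monom_mult)
      moreover have "ev \<gamma> g = 0" using c e by (simp add: g_def mult.commute)
      ultimately obtain t where t: "g = smult t f" using DEGN by blast
      have "n - d = Suc k" using d by simp
      then have "coeff g n = coeff c (Suc k)"
        using e(1) d by (simp add: g_def coeff_monom_mult)
      then have ct: "coeff c (Suc k) = t * coeff f n" using t by simp
      define x' where "x' = x - of_int t * pp (Suc k)"
      have x'c: "x' \<in> colon K M M"
        unfolding x'_def using x R_colon D_R pp_D[of "Suc k"] Suc.prems zmodD[OF zmod_colonM] by blast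
      have xs: "x = (\<Sum>i<Suc k. of_int (coeff c i) * \<gamma> ^ i) + of_int (coeff c (Suc k)) * \<gamma> ^ Suc k"
        using ev_coeffs[of "Suc (Suc k)" c \<gamma>] c by simp
      have "x' = (\<Sum>i<Suc k. of_int (coeff c i) * \<gamma> ^ i) - of_int t * (pp (Suc k) - of_int (coeff f n) * \<gamma> ^ Suc k)"
        unfolding x'_def xs ct by (simp add: algebra_simps)
      also have "\<dots> \<in> W (Suc k)"
        by (intro zmodD[OF zmod_zspan] pp_top W_iff[THEN iffD2] exI[of _ "\<Sum>i<Suc k. monom (coeff c i) i"])
           (simp add: coeff_sum_monom ev_sum_monom)
      finally have "x' \<in> R" using Suc.hyps Suc.prems x'c by simp
      moreover have "of_int t * pp (Suc k) \<in> R" using D_R pp_D[of "Suc k"] Suc.prems zmodD(3)[OF zmod_R] by blast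
      ultimately have "x' + of_int t * pp (Suc k) \<in> R" using zmodD(2)[OF zmod_R] by blast
      then show "x \<in> R" by (simp add: x'_def)
    qed
  qed
  show ?thesis
  proof
    fix x assume "x \<in> colon K M M"
    moreover have "Suc (n - 1) = n" using n2 by simp
    ultimately show "x \<in> R" using main[of "n - 1"] colon_M n2 by force
  qed
qed

lemma R_eq_colon: "R = colon K M M" using C3 R_colon by blast
lemma R_eq_Zadj: "R = Zadj \<gamma> \<inter> Zadj (inverse \<gamma>)" using C1 C2 C3 by blast

end

lemma setadd_sub: assumes "S \<subseteq> U" "T \<subseteq> U" "zmod U" shows "setadd S T \<subseteq> U"
proof
  fix z assume "z \<in> setadd S T"
  then obtain u v where "u \<in> S" "v \<in> T" "z = u + v" by (elim setadd_E)
  then show "z \<in> U" using assms zmodD(2)[OF assms(3)] by blast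
qed

lemma zmod_closed_image: "zmod S \<Longrightarrow> zmod {y. c * y \<in> S}" by (rule zmod_mulpre)

context ctx
begin

lemma N_eq: "N = (\<lambda>x. \<gamma> * x) ` D"
proof
  show "N \<subseteq> (\<lambda>x. \<gamma> * x) ` D"
  proof (rule zspan_sub[OF zmod_image[OF zmod_zspan]])
    fix i assume "i < n"
    have "\<gamma> * pp (n - 1 - i) = - qq i" using pq_rel[of "n - 1 - i"] \<open>i < n\<close> by simp
    then have "qq i = \<gamma> * (- pp (n - 1 - i))" by simp
    moreover have "- pp (n - 1 - i) \<in> D" using \<open>i < n\<close> by (intro zmodD(4)[OF zmod_zspan] pp_D) simp
    ultimately show "qq i \<in> (\<lambda>x. \<gamma> * x) ` D" by blast
  qed
  have "D \<subseteq> {y. \<gamma> * y \<in> N}"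
  proof (rule zspan_sub[OF zmod_mulpre[OF zmod_zspan]])
    fix j assume "j < n"
    then show "pp j \<in> {y. \<gamma> * y \<in> N}"
      using pq_rel[OF \<open>j < n\<close>] qq_N[of "n - 1 - j"] zmodD(4)[OF zmod_zspan] by auto
  qed
  then show "(\<lambda>x. \<gamma> * x) ` D \<subseteq> N" by blast
qed

lemma gD_R: "d \<in> D \<Longrightarrow> \<gamma> * d \<in> R"
proof -
  have "D \<subseteq> {y. \<gamma> * y \<in> R}"
  proof (rule zspan_sub[OF zmod_mulpre[OF zmod_R]])
    fix j assume j: "j < n"
    show "pp j \<in> {y. \<gamma> * y \<in> R}"
    proof (cases "Suc j < n")
      case True
      have "\<gamma> * pp j = pp (Suc j) - of_int (coeff f (n - Suc j))" using pp_rec[of j] by simp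
      moreover have "pp (Suc j) \<in> R" using True D_R pp_D by blast
      moreover have "of_int (coeff f (n - Suc j)) \<in> R" using Zset_R by auto
      ultimately show ?thesis using zmodD(5)[OF zmod_R] by simp
    next
      case False
      then have "n - 1 - j = 0" using j by simp
      then have "\<gamma> * pp j = - of_int (coeff f 0)" using pq_rel[OF j] qq0 by simp
      then show ?thesis using Zset_R by (auto simp: Zset_def intro: range_eqI[of _ _ "- coeff f 0"])
    qed
  qed
  then show "d \<in> D \<Longrightarrow> \<gamma> * d \<in> R" by blast
qed

lemma N_R: "N \<subseteq> R" using gD_R N_eq by auto

lemma ZN_eq: "setadd Zset N = R"
proof
  show "setadd Zset N \<subseteq> R"
  proof
    fix z assume "z \<in> setadd Zset N"
    then obtain u v where "u \<in> Zset" "v \<in> N" "z = u + v" by (elim setadd_E)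
    then show "z \<in> R" using N_R Zset_R zmodD(2)[OF zmod_R] by blast
  qed
  have z: "zmod (setadd Zset N)" by (intro zmod_setadd zmod_Zset zmod_zspan)
  have ZN: "Zset \<subseteq> setadd Zset N" using setadd_I[of _ Zset 0 N] zmodD(1)[OF zmod_zspan] by auto
  have "D \<subseteq> setadd Zset N"
  proof (rule zspan_sub[OF z])
    fix j assume j: "j < n"
    show "pp j \<in> setadd Zset N"
    proof (cases j)
      case 0 then show ?thesis using ZN pp0 by auto
    next
      case (Suc j')
      then have "pp j = of_int (coeff f (n - Suc j')) + \<gamma> * pp j'" using pp_rec[of j'] by simp
      moreover have "\<gamma> * pp j' \<in> N" using N_eq pp_D[of j'] j Suc by auto
      ultimately show ?thesis by (auto intro: setadd_I)
    qed
  qed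
  then show "R \<subseteq> setadd Zset N" using ZN z by (intro setadd_sub)
qed

lemma Kn: assumes "of_int c * \<gamma> ^ n \<in> M" shows "coeff f n dvd c"
proof -
  obtain e where e: "\<forall>i\<ge>n. coeff e i = 0" "ev \<gamma> e = of_int c * \<gamma> ^ n" using assms W_iff by blast
  define g where "g = monom c n - e"
  have "\<forall>i>n. coeff g i = 0" using e by (auto simp: g_def coeff_monom)
  moreover have "ev \<gamma> g = 0" using e by (simp add: g_def)
  ultimately obtain t where "g = smult t f" using DEGN by blast
  then have "coeff g n = t * coeff f n" by simp
  moreover have "coeff g n = c" using e by (simp add: g_def)
  ultimately show ?thesis by simp
qed

lemma K0: assumes "of_int c * inverse \<gamma> \<in> M" shows "coeff f 0 dvd c"
proof -
  obtain e where e: "\<forall>i\<ge>n. coeff e i = 0" "ev \<gamma> e = of_int c * inverse \<gamma>" using assms W_iff by blast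
  define g where "g = [:c:] - monom 1 1 * e"
  have "\<forall>i>n. coeff g i = 0" using e by (auto simp: g_def coeff_monom_mult coeff_pCons split: nat.split)
  moreover have "ev \<gamma> g = 0" using e gamma_nz by (simp add: g_def)
  ultimately obtain t where "g = smult t f" using DEGN by blast
  then have "coeff g 0 = t * coeff f 0" by simp
  moreover have "coeff g 0 = c" by (simp add: g_def coeff_monom_mult)
  ultimately show ?thesis by simp
qed

lemma colon_pow: "x \<in> colon K M M \<Longrightarrow> i < n \<Longrightarrow> x * \<gamma> ^ i \<in> M"
  using W_pow by (auto simp: colon_def)

lemma Dchar: assumes "x \<in> R" "\<gamma> * x \<in> R" shows "x \<in> D"
proof -
  obtain z d where zd: "z \<in> Zset" "d \<in> D" "x = z + d" using assms(1) by (elim setadd_E)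
  obtain c where c: "z = of_int c" using zd(1) by (auto simp: Zset_def)
  have "\<gamma> * z = \<gamma> * x - \<gamma> * d" using zd by (simp add: algebra_simps)
  then have "\<gamma> * z \<in> R" using assms(2) gD_R[OF zd(2)] zmodD(5)[OF zmod_R] by simp
  then have "\<gamma> * z * \<gamma> ^ (n - 1) \<in> M" using R_colon colon_pow[of _ "n - 1"] n2 by auto
  moreover have "\<gamma> * z * \<gamma> ^ (n - 1) = of_int c * \<gamma> ^ n"
    using n2 c by (simp add: power_Suc[symmetric] algebra_simps del: power_Suc)
  ultimately have "coeff f n dvd c" using Kn by simp
  then obtain t where "c = coeff f n * t" by (elim dvdE)
  then have "z = of_int t * pp 0" using c pp0 by simp
  then have "z \<in> D" using pp_D[of 0] n2 zmodD(3)[OF zmod_zspan] by simp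
  then show ?thesis using zd zmodD(2)[OF zmod_zspan] by simp
qed

lemma R_ring_closed: "x \<in> R \<Longrightarrow> y \<in> R \<Longrightarrow> x * y \<in> R"
  unfolding R_eq_colon colon_def using nf_mult by (auto simp: mult.assoc)

lemma one_R: "1 \<in> R" using Zset_R by (auto simp: Zset_def intro: range_eqI[of _ _ 1])

lemma ring_R: "ring (subring_struct R)"
  by (rule ring_sub) (auto intro: zmodD[OF zmod_R] one_R R_ring_closed)

lemma D_ideal_closed: assumes "r \<in> R" "d \<in> D" shows "r * d \<in> D"
proof (rule Dchar)
  show "r * d \<in> R" using assms D_R R_ring_closed by blast
  have "r * (\<gamma> * d) \<in> R" using assms gD_R R_ring_closed by blast
  then show "\<gamma> * (r * d) \<in> R" by (simp add: ac_simps)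
qed

lemma N_ideal_closed: "r \<in> R \<Longrightarrow> y \<in> N \<Longrightarrow> r * y \<in> N"
  unfolding N_eq using D_ideal_closed by (auto simp: mult.left_commute)

lemma ideal_D: "ideal D (subring_struct R)"
  by (rule ideal_sub[OF ring_R D_R]) (auto intro: zmodD[OF zmod_zspan] D_ideal_closed)

lemma ideal_N: "ideal N (subring_struct R)"
  by (rule ideal_sub[OF ring_R N_R]) (auto intro: zmodD[OF zmod_zspan] N_ideal_closed)

end

lemma Gcd_in: assumes "finite T" "\<And>t. t \<in> T \<Longrightarrow> of_int t \<in> X" "zmod X"
  shows "of_int (Gcd T) \<in> X"
  using assms
proof (induct T rule: finite_induct)
  case empty then show ?case using zmodD(1)[OF empty(2)] by simp
next
  case (insert a T)
  obtain u v where uv: "u * a + v * Gcd T = gcd a (Gcd T)" using bezout_int by blast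
  have "of_int u * of_int a + of_int v * of_int (Gcd T) \<in> X"
    using insert zmodD(2,3)[OF insert(5)] by simp
  moreover have "of_int (Gcd (insert a T)) = (of_int u * of_int a + of_int v * of_int (Gcd T) :: complex)"
    using uv[symmetric] by simp
  ultimately show ?case by simp
qed

lemma inv_gen:
  assumes zR: "zmod R" and oneR: "1 \<in> R" and mulR: "\<And>x y. x \<in> R \<Longrightarrow> y \<in> R \<Longrightarrow> x * y \<in> R"
    and RK: "R \<subseteq> numfield g" and cK: "c \<in> numfield g"
    and XR: "X \<subseteq> R" and cX: "\<And>x. x \<in> X \<Longrightarrow> c * x \<in> R"
    and YX: "\<And>y. y \<in> Y \<Longrightarrow> \<exists>x\<in>X. y = c * x" and XY: "setadd X Y = R"
  shows "invertible_ideal (numfield g) R X"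
proof -
  define J where "J = setadd R ((\<lambda>x. c * x) ` R)"
  have Jmem: "r + c * r' \<in> J" if "r \<in> R" "r' \<in> R" for r r'
    unfolding J_def by (rule setadd_I[OF that(1)]) (use that(2) in blast)
  have JE: "\<exists>r r'. r \<in> R \<and> r' \<in> R \<and> z = r + c * r'" if zJ: "z \<in> J" for z
  proof -
    have "z \<in> setadd R ((\<lambda>x. c * x) ` R)" using zJ unfolding J_def .
    then obtain u v where "u \<in> R" "v \<in> (\<lambda>x. c * x) ` R" "z = u + v" by (elim setadd_E)
    then show ?thesis by blast
  qed
  have sub: "is_submodule (numfield g) R J"
    unfolding is_submodule_def
  proof (intro conjI ballI)
    show "J \<subseteq> numfield g"
    proof
      fix z assume "z \<in> J"
      then obtain r r' where "r \<in> R" "r' \<in> R" "z = r + c * r'" using JE by blast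
      then show "z \<in> numfield g" using RK cK nf_add nf_mult by blast
    qed
    show "0 \<in> J" using Jmem[of 0 0] zmodD(1)[OF zR] by simp
    fix x assume "x \<in> J"
    then obtain r r' where rr: "r \<in> R" "r' \<in> R" "x = r + c * r'" using JE by blast
    show "- x \<in> J" using Jmem[of "- r" "- r'"] rr zmodD(4)[OF zR] by simp
    {
      fix y assume "y \<in> J"
      then obtain s s' where ss: "s \<in> R" "s' \<in> R" "y = s + c * s'" using JE by blast
      show "x + y \<in> J" using Jmem[of "r + s" "r' + s'"] rr ss zmodD(2)[OF zR] by (simp add: algebra_simps)
    }
  next
    fix a x assume "a \<in> R" "x \<in> J"
    then obtain r r' where rr: "r \<in> R" "r' \<in> R" "x = r + c * r'" using JE by blast
    show "a * x \<in> J" using Jmem[of "a * r" "a * r'"] rr mulR \<open>a \<in> R\<close> by (simp add: algebra_simps)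
  qed
  have "setmul X J = R"
  proof
    show "setmul X J \<subseteq> R"
    proof
      fix z assume "z \<in> setmul X J"
      then obtain ps where ps: "z = sum_list (map (\<lambda>(x, y). x * y) ps)" "set ps \<subseteq> X \<times> J"
        by (auto simp: setmul_def)
      have "sum_list (map (\<lambda>(x, y). x * y) ps) \<in> R" using ps(2)
      proof (induct ps)
        case Nil then show ?case using zmodD(1)[OF zR] by simp
      next
        case (Cons p ps)
        obtain x y where p: "p = (x, y)" by (cases p)
        have x: "x \<in> X" "y \<in> J" using Cons.prems p by auto
        then obtain r r' where rr: "r \<in> R" "r' \<in> R" "y = r + c * r'" using JE by blast
        have "x * y = x * r + (c * x) * r'" using rr by (simp add: algebra_simps)
        moreover have "x * r + (c * x) * r' \<in> R"
        proof -
          have "x \<in> R" using x(1) XR by blast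
          then have "x * r \<in> R" using rr(1) mulR by blast
          moreover have "(c * x) * r' \<in> R" using cX[OF x(1)] rr(2) mulR by blast
          ultimately show ?thesis using zmodD(2)[OF zR] by blast
        qed
        ultimately have "x * y \<in> R" by simp
        then show ?case using Cons p zmodD(2)[OF zR] by auto
      qed
      then show "z \<in> R" using ps by simp
    qed
    show "R \<subseteq> setmul X J"
    proof
      fix z assume "z \<in> R"
      then have "z \<in> setadd X Y" using XY by simp
      then obtain x y where xy: "x \<in> X" "y \<in> Y" "z = x + y" by (elim setadd_E)
      obtain x' where x': "x' \<in> X" "y = c * x'" using YX xy(2) by blast
      have "1 \<in> J" using Jmem[of 1 0] oneR zmodD(1)[OF zR] by simp
      moreover have "c \<in> J" using Jmem[of 0 1] oneR zmodD(1)[OF zR] by simp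
      ultimately have "set [(x, 1), (x', c)] \<subseteq> X \<times> J" using xy x' by auto
      moreover have "z = sum_list (map (\<lambda>(x, y). x * y) [(x, 1), (x', c)])" using xy x' by simp
      ultimately show "z \<in> setmul X J" unfolding setmul_def by blast
    qed
  qed
  then show ?thesis using sub by (auto simp: invertible_ideal_def)
qed

context ctx
begin

lemma coeff_ND: "of_int (coeff f i) \<in> setadd N D"
proof -
  have N0: "0 \<in> N" "0 \<in> D" by (simp_all add: zmodD(1)[OF zmod_zspan])
  consider "i = 0" | "0 < i \<and> i < n" | "i = n" | "i > n" by linarith
  then show ?thesis
  proof cases
    case 1 then show ?thesis using setadd_I[OF qq_N[of 0] N0(2)] qq0 n2 by simp
  next
    case 2
    have "pp (Suc (n - 1 - i)) = \<gamma> * pp (n - 1 - i) + of_int (coeff f (n - Suc (n - 1 - i)))" by (rule pp_rec)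
    moreover have "\<gamma> * pp (n - 1 - i) = - qq i" using pq_rel[of "n - 1 - i"] 2 by simp
    moreover have "Suc (n - 1 - i) = n - i" "n - (n - i) = i" using 2 by auto
    ultimately have "qq i + pp (n - i) = of_int (coeff f i)" by simp
    moreover have "qq i \<in> N" "pp (n - i) \<in> D" using 2 by (auto intro: qq_N pp_D)
    ultimately show ?thesis using setadd_I by metis
  next
    case 3 then show ?thesis using setadd_I[OF N0(1) pp_D[of 0]] pp0 n2 by simp
  next
    case 4 then have "coeff f i = 0" using deg by (simp add: coeff_eq_0)
    then show ?thesis using setadd_I[OF N0] by simp
  qed
qed

lemma zmod_ND: "zmod (setadd N D)" by (intro zmod_setadd zmod_zspan)

lemma one_ND: "1 \<in> setadd N D"
proof -
  define c where "c = Gcd (coeff f ` {..n})"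
  have cin: "of_int c \<in> setadd N D" unfolding c_def
    by (rule Gcd_in[OF _ _ zmod_ND]) (auto intro: coeff_ND)
  have cdvd: "c dvd coeff f i" for i
  proof (cases "i \<le> n")
    case True then show ?thesis unfolding c_def by (intro Gcd_dvd) auto
  next
    case False then show ?thesis using deg by (simp add: coeff_eq_0)
  qed
  define f' where "f' = map_poly (\<lambda>x. x div c) f"
  have ff: "f = [:c:] * f'"
    using cdvd by (auto simp: poly_eq_iff f'_def coeff_map_poly)
  have "\<not> is_unit f'"
  proof
    assume "is_unit f'"
    then have "degree f' = 0" by (auto simp: is_unit_poly_iff)
    then have "degree f = 0" using ff degree_mult_le[of "[:c:]" f'] by simp
    then show False using deg n2 by simp
  qed
  then have "is_unit [:c:]" using irreducibleD[OF irr ff] by blast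
  then have "c dvd 1" by (auto simp: is_unit_poly_iff)
  then obtain u where "1 = c * u" by (elim dvdE)
  then have "1 = of_int u * (of_int c :: complex)" by (metis mult.commute of_int_1 of_int_mult)
  then show ?thesis using zmodD(3)[OF zmod_ND cin, of u] by simp
qed

lemma ND_eq: "setadd N D = R"
proof
  show "setadd N D \<subseteq> R" by (rule setadd_sub[OF N_R D_R zmod_R])
  have "Zset \<subseteq> setadd N D" using Zset_sub[OF zmod_ND one_ND] .
  moreover have "D \<subseteq> setadd N D" using setadd_I[of 0 N _ D] zmodD(1)[OF zmod_zspan] by auto
  ultimately show "R \<subseteq> setadd N D" by (rule setadd_sub[OF _ _ zmod_ND])
qed

lemma setadd_comm: "setadd S T = setadd T S"
proof -
  have "setadd S T \<subseteq> setadd T S" for S T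
  proof
    fix z assume "z \<in> setadd S T"
    then obtain u v where "u \<in> S" "v \<in> T" "z = u + v" by (elim setadd_E)
    then show "z \<in> setadd T S" using setadd_I[of v T u S] by (simp add: add.commute)
  qed
  then show ?thesis by blast
qed

lemma DN_eq: "setadd D N = R"
  using ND_eq setadd_comm by metis

lemma R_K: "R \<subseteq> K" using R_eq_colon by (auto simp: colon_def)

lemma inv_N: "invertible_ideal K R N"
proof (rule inv_gen[OF zmod_R one_R R_ring_closed R_K ginv_K N_R])
  fix x assume "x \<in> N"
  then obtain d where "d \<in> D" "x = \<gamma> * d" using N_eq by blast
  then have "inverse \<gamma> * x = d" using gamma_nz by simp
  then show "inverse \<gamma> * x \<in> R" using \<open>d \<in> D\<close> D_R by auto
next
  fix y assume "y \<in> D"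
  then have "\<gamma> * y \<in> N" using N_eq by blast
  moreover have "y = inverse \<gamma> * (\<gamma> * y)" using gamma_nz by simp
  ultimately show "\<exists>x\<in>N. y = inverse \<gamma> * x" by blast
qed (simp_all add: ND_eq)

lemma inv_D: "invertible_ideal K R D"
proof (rule inv_gen[OF zmod_R one_R R_ring_closed R_K gamma_K D_R])
  fix x assume "x \<in> D"
  then show "\<gamma> * x \<in> R" using gD_R by blast
next
  fix y assume "y \<in> N"
  then show "\<exists>x\<in>D. y = \<gamma> * x" using N_eq by blast
qed (simp_all add: DN_eq)

lemma ints_R: "of_int k \<in> R" using Zset_R by auto

lemma quot_N: "subring_struct R Quot N \<simeq> ZFact (coeff f 0)"
proof (rule quot_iso[OF ring_R ideal_N ints_R])
  fix x assume "x \<in> R"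
  then have "x \<in> setadd Zset N" using ZN_eq by simp
  then obtain u v where "u \<in> Zset" "v \<in> N" "x = u + v" by (elim setadd_E)
  moreover obtain k where "u = of_int k" using \<open>u \<in> Zset\<close> by (auto simp: Zset_def)
  ultimately show "\<exists>k. x - of_int k \<in> N" by (intro exI[of _ k]) simp
next
  fix k
  show "(of_int k \<in> N) = (coeff f 0 dvd k)"
  proof
    assume "of_int k \<in> N"
    then obtain d where d: "d \<in> D" "of_int k = \<gamma> * d" using N_eq by blast
    then have "d \<in> M" using D_R R_colon colon_M by blast
    moreover have "d = of_int k * inverse \<gamma>" using d gamma_nz by (simp add: field_simps)
    ultimately show "coeff f 0 dvd k" using K0 by simp
  next
    assume "coeff f 0 dvd k"
    then obtain t where "k = coeff f 0 * t" by (elim dvdE)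
    then have "of_int k = of_int t * qq 0" using qq0 by simp
    then show "of_int k \<in> N" using qq_N[of 0] n2 zmodD(3)[OF zmod_zspan] by simp
  qed
qed

lemma quot_D: "subring_struct R Quot D \<simeq> ZFact (coeff f n)"
proof (rule quot_iso[OF ring_R ideal_D ints_R])
  fix x assume "x \<in> R"
  then obtain u v where "u \<in> Zset" "v \<in> D" "x = u + v" by (elim setadd_E)
  moreover obtain k where "u = of_int k" using \<open>u \<in> Zset\<close> by (auto simp: Zset_def)
  ultimately show "\<exists>k. x - of_int k \<in> D" by (intro exI[of _ k]) simp
next
  fix k
  show "(of_int k \<in> D) = (coeff f n dvd k)"
  proof
    assume "of_int k \<in> D"
    then have "\<gamma> * of_int k \<in> R" using gD_R by blast
    then have m: "\<gamma> * of_int k * \<gamma> ^ (n - 1) \<in> M" using R_colon colon_pow[of _ "n - 1"] n2 by auto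
    have eq: "\<gamma> * of_int k * \<gamma> ^ (n - 1) = of_int k * \<gamma> ^ n"
      using n2 by (simp add: power_Suc[symmetric] algebra_simps del: power_Suc)
    show "coeff f n dvd k" using m[unfolded eq] by (rule Kn)
  next
    assume "coeff f n dvd k"
    then obtain t where "k = coeff f n * t" by (elim dvdE)
    then have "of_int k = of_int t * pp 0" using pp0 by simp
    then show "of_int k \<in> D" using pp_D[of 0] n2 zmodD(3)[OF zmod_zspan] by simp
  qed
qed

lemma colon_ND: "colon K N D = (\<lambda>x. \<gamma> * x) ` R"
proof
  show "(\<lambda>x. \<gamma> * x) ` R \<subseteq> colon K N D"
  proof
    fix z assume "z \<in> (\<lambda>x. \<gamma> * x) ` R"
    then obtain r where r: "r \<in> R" "z = \<gamma> * r" by blast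
    have "z \<in> K" using r R_K gamma_K nf_mult by blast
    moreover have "z * d \<in> N" if "d \<in> D" for d
    proof -
      have "\<gamma> * d \<in> N" using that N_eq by blast
      then have "r * (\<gamma> * d) \<in> N" using N_ideal_closed r by blast
      then show ?thesis using r by (simp add: ac_simps)
    qed
    ultimately show "z \<in> colon K N D" by (auto simp: colon_def)
  qed
  show "colon K N D \<subseteq> (\<lambda>x. \<gamma> * x) ` R"
  proof
    fix x assume x: "x \<in> colon K N D"
    obtain u d where ud: "u \<in> N" "d \<in> D" "1 = u + d" using one_ND by (elim setadd_E)
    obtain d' where d': "d' \<in> D" "u = \<gamma> * d'" using ud N_eq by blast
    have "x * d \<in> N" using x ud by (auto simp: colon_def)
    then obtain d'' where d'': "d'' \<in> D" "x * d \<in> N" "x * d = \<gamma> * d''" using N_eq by blast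
    have "x * d' \<in> N" using x d' by (auto simp: colon_def)
    then have "x * d' \<in> R" using N_R by blast
    have "x = x * (u + d)" using ud by simp
    also have "\<dots> = \<gamma> * (x * d' + d'')" using d' d'' by (simp add: algebra_simps)
    finally have "x = \<gamma> * (x * d' + d'')" .
    moreover have "x * d' + d'' \<in> R" using \<open>x * d' \<in> R\<close> d'' D_R zmodD(2)[OF zmod_R] by blast
    ultimately show "x \<in> (\<lambda>x. \<gamma> * x) ` R" by blast
  qed
qed

end

lemma setmul_sub: assumes "zmod U" "\<And>x y. x \<in> S \<Longrightarrow> y \<in> T \<Longrightarrow> x * y \<in> U"
  shows "setmul S T \<subseteq> U"
proof
  fix z assume "z \<in> setmul S T"
  then obtain ps where ps: "z = sum_list (map (\<lambda>(x, y). x * y) ps)" "set ps \<subseteq> S \<times> T"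
    by (auto simp: setmul_def)
  have "sum_list (map (\<lambda>(x, y). x * y) ps) \<in> U" using ps(2)
  proof (induct ps)
    case Nil then show ?case using zmodD(1)[OF assms(1)] by simp
  next
    case (Cons p ps)
    obtain x y where p: "p = (x, y)" by (cases p)
    have "x * y \<in> U" using Cons.prems p assms(2) by auto
    then show ?case using Cons p zmodD(2)[OF assms(1)] by auto
  qed
  then show "z \<in> U" using ps by simp
qed

lemma setmul_single: "x \<in> S \<Longrightarrow> y \<in> T \<Longrightarrow> x * y \<in> setmul S T"
  unfolding setmul_def by (rule CollectI, rule exI[of _ "[(x, y)]"]) auto

lemma sum_list_scale: "sum_list (map (\<lambda>(x, y). x * y) (map (\<lambda>(x, y). (x, c * y)) ps)) = (c::complex) * sum_list (map (\<lambda>(x, y). x * y) ps)"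
  by (induct ps) (auto simp: algebra_simps)

lemma zmod_setmul: assumes "zmod T" shows "zmod (setmul S T)"
  unfolding zmod_def
proof (intro conjI ballI allI impI)
  show "0 \<in> setmul S T" unfolding setmul_def by (rule CollectI, rule exI[of _ "[]"]) simp
next
  fix x y assume "x \<in> setmul S T" "y \<in> setmul S T"
  then obtain ps qs where "x = sum_list (map (\<lambda>(x, y). x * y) ps)" "set ps \<subseteq> S \<times> T"
    "y = sum_list (map (\<lambda>(x, y). x * y) qs)" "set qs \<subseteq> S \<times> T" by (auto simp: setmul_def)
  then show "x + y \<in> setmul S T" unfolding setmul_def
    by (intro CollectI exI[of _ "ps @ qs"]) auto
next
  fix c x assume "x \<in> setmul S T"
  then obtain ps where ps: "x = sum_list (map (\<lambda>(x, y). x * y) ps)" "set ps \<subseteq> S \<times> T"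
    by (auto simp: setmul_def)
  have "set (map (\<lambda>(x, y). (x, of_int c * y)) ps) \<subseteq> S \<times> T"
    using ps(2) zmodD(3)[OF assms] by auto
  moreover have "of_int c * x = sum_list (map (\<lambda>(x, y). x * y) (map (\<lambda>(x, y). (x, of_int c * y)) ps))"
    using ps(1) sum_list_scale by simp
  ultimately show "of_int c * x \<in> setmul S T" unfolding setmul_def by blast
qed

lemma zmod_mulall: "zmod U \<Longrightarrow> zmod {x. \<forall>y\<in>T. x * y \<in> U}"
  unfolding zmod_def by (auto simp: distrib_right mult.assoc)

context ctx
begin

abbreviation "Oc \<equiv> colon K (W 2) (W 2)"

lemma one_O: "1 \<in> Oc" using one_K by (auto simp: colon_def)

lemma W_mult_W2: assumes "x \<in> W (Suc k)" "y \<in> W 2" shows "x * y \<in> W (Suc (Suc k))"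
proof -
  have "W (Suc k) \<subseteq> {x. \<forall>y\<in>W 2. x * y \<in> W (Suc (Suc k))}"
  proof (rule zspan_sub[OF zmod_mulall[OF zmod_zspan]])
    fix i assume "i < Suc k"
    have "W 2 \<subseteq> {y. \<gamma> ^ i * y \<in> W (Suc (Suc k))}"
    proof (rule zspan_sub[OF zmod_mulpre[OF zmod_zspan]])
      fix j :: nat assume "j < 2"
      then show "\<gamma> ^ j \<in> {y. \<gamma> ^ i * y \<in> W (Suc (Suc k))}"
        using \<open>i < Suc k\<close> by (auto simp: power_add[symmetric] intro!: W_pow)
    qed
    then show "\<gamma> ^ i \<in> {x. \<forall>y\<in>W 2. x * y \<in> W (Suc (Suc k))}" by blast
  qed
  then show ?thesis using assms by blast
qed

lemma setpow_W: "k \<ge> 1 \<Longrightarrow> setpow K (W 2) k = W (Suc k)"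
proof (induct k)
  case 0 then show ?case by simp
next
  case (Suc k)
  show ?case
  proof (cases k)
    case 0
    have "setmul Oc (W 2) = W 2"
    proof
      show "setmul Oc (W 2) \<subseteq> W 2" by (rule setmul_sub[OF zmod_zspan]) (auto simp: colon_def)
      show "W 2 \<subseteq> setmul Oc (W 2)"
      proof
        fix y assume "y \<in> W 2"
        then have "1 * y \<in> setmul Oc (W 2)" by (rule setmul_single[OF one_O])
        then show "y \<in> setmul Oc (W 2)" by simp
      qed
    qed
    then show ?thesis using 0 by (simp add: numeral_2_eq_2)
  next
    case (Suc k')
    then have IH: "setpow K (W 2) k = W (Suc k)" using Suc.hyps by simp
    have "setmul (W (Suc k)) (W 2) = W (Suc (Suc k))"
    proof
      show "setmul (W (Suc k)) (W 2) \<subseteq> W (Suc (Suc k))"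
        by (rule setmul_sub[OF zmod_zspan]) (rule W_mult_W2)
      show "W (Suc (Suc k)) \<subseteq> setmul (W (Suc k)) (W 2)"
      proof (rule zspan_sub[OF zmod_setmul[OF zmod_zspan]])
        fix i assume i: "i < Suc (Suc k)"
        show "\<gamma> ^ i \<in> setmul (W (Suc k)) (W 2)"
        proof (cases "i < Suc k")
          case True
          then show ?thesis using setmul_single[OF W_pow[OF True] W_pow[of 0 2 \<gamma>]] by simp
        next
          case False
          then have "i = Suc k" using i by simp
          then show ?thesis using setmul_single[OF W_pow[of k "Suc k" \<gamma>] W_pow[of 1 2 \<gamma>]] by (simp add: mult.commute)
        qed
      qed
    qed
    then show ?thesis using IH by simp
  qed
qed

lemma O_sub: "Oc \<subseteq> colon K M M"
proof
  fix x assume x: "x \<in> Oc"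
  have "M \<subseteq> {y. x * y \<in> M}"
  proof (rule zspan_sub[OF zmod_mulpre[OF zmod_zspan]])
    fix j assume j: "j < n"
    show "\<gamma> ^ j \<in> {y. x * y \<in> M}"
    proof (cases j)
      case 0
      have "1 \<in> W 2" using W_pow[of 0 2 \<gamma>] by simp
      then have "x * 1 \<in> W 2" using x unfolding colon_def by blast
      then have "x * 1 \<in> M" using zspan_mono[OF n2] by blast
      then show ?thesis using 0 by simp
    next
      case (Suc j')
      have "\<gamma> \<in> W 2" using W_pow[of 1 2 \<gamma>] by simp
      then have "x * \<gamma> \<in> W 2" using x unfolding colon_def by blast
      then have "\<gamma> ^ j' * (x * \<gamma>) \<in> W (2 + j')" by (rule W_mult_pow)
      moreover have "W (2 + j') \<subseteq> M" using j Suc by (intro zspan_mono) simp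
      moreover have "\<gamma> ^ j' * (x * \<gamma>) = x * \<gamma> ^ j" using Suc by (simp add: ac_simps)
      ultimately show ?thesis by auto
    qed
  qed
  moreover have "x \<in> K" using x unfolding colon_def by blast
  ultimately show "x \<in> colon K M M" unfolding colon_def by blast
qed

lemma colonW_R: assumes "x \<in> colon K (W (Suc k)) (W (Suc k))" shows "x \<in> R"
proof -
  have "x * 1 \<in> W (Suc k)" using assms W_pow[of 0 "Suc k" \<gamma>] by (auto simp: colon_def)
  then have x1: "x \<in> Zadj \<gamma>" unfolding Zadj_iff by (intro exI[of _ "Suc k"]) simp
  have xk: "x * \<gamma> ^ k \<in> W (Suc k)" using assms W_pow[of k "Suc k" \<gamma>] by (auto simp: colon_def)
  have "W (Suc k) \<subseteq> {y. inverse \<gamma> ^ k * y \<in> Zadj (inverse \<gamma>)}"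
  proof (rule zspan_sub[OF zmod_mulpre[OF zmod_Zadj]])
    fix i assume "i < Suc k"
    then have "\<gamma> ^ k = \<gamma> ^ (k - i) * \<gamma> ^ i" by (simp add: power_add[symmetric])
    then have "inverse \<gamma> ^ k * \<gamma> ^ i = inverse \<gamma> ^ (k - i)"
      using gamma_nz by (simp add: power_inverse field_simps)
    then show "\<gamma> ^ i \<in> {y. inverse \<gamma> ^ k * y \<in> Zadj (inverse \<gamma>)}" using pow_Zadj by simp
  qed
  then have "inverse \<gamma> ^ k * (x * \<gamma> ^ k) \<in> Zadj (inverse \<gamma>)" using xk by blast
  moreover have "inverse \<gamma> ^ k * (x * \<gamma> ^ k) = x" using gamma_nz by (simp add: power_inverse field_simps)
  ultimately have "x \<in> Zadj \<gamma> \<inter> Zadj (inverse \<gamma>)" using x1 by simp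
  then show ?thesis using C2 C3 by blast
qed

lemma Bl_eq: "Bl K (W 2) = colon K M M"
proof
  show "Bl K (W 2) \<subseteq> colon K M M"
  proof
    fix x assume "x \<in> Bl K (W 2)"
    then obtain k where k: "x \<in> colon K (setpow K (W 2) k) (setpow K (W 2) k)" by (auto simp: Bl_def)
    show "x \<in> colon K M M"
    proof (cases k)
      case 0
      then have "x \<in> colon K Oc Oc" using k by simp
      then have "x * 1 \<in> Oc" using one_O unfolding colon_def by blast
      then show ?thesis using O_sub by auto
    next
      case (Suc k')
      then have "x \<in> colon K (W (Suc k)) (W (Suc k))" using k setpow_W[of k] by simp
      then show ?thesis using colonW_R R_colon by blast
    qed
  qed
  have "setpow K (W 2) (n - 1) = M" using setpow_W[of "n - 1"] n2 by simp
  then show "colon K M M \<subseteq> Bl K (W 2)" unfolding Bl_def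
  proof (intro subsetI)
    fix x assume "x \<in> colon K M M"
    then have "x \<in> colon K (setpow K (W 2) (n - 1)) (setpow K (W 2) (n - 1))" using \<open>setpow K (W 2) (n - 1) = M\<close> by simp
    then show "x \<in> (\<Union>k. colon K (setpow K (W 2) k) (setpow K (W 2) k))" by blast
  qed
qed

end

theorem theorem4p59:
  fixes f :: "int poly" and \<gamma> :: complex and n :: nat
  assumes deg: "degree f = n" and n2: "n \<ge> 2"
    and irr: "irreducible f"
    and root: "poly (map_poly of_int f) \<gamma> = 0"
  defines "K \<equiv> numfield \<gamma>"
    and "a \<equiv> (\<lambda>i. coeff f i)"
  defines "p \<equiv> (\<lambda>j. \<Sum>k\<le>j. of_int (a (n - k)) * \<gamma> ^ (j - k))"
    and "q \<equiv> (\<lambda>j. \<Sum>k\<le>j. of_int (a (j - k)) * (inverse \<gamma>) ^ k)"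
  defines "M \<equiv> zspan (\<lambda>i. \<gamma> ^ i) n"
    and "D \<equiv> zspan p n"
    and "N \<equiv> zspan q n"
  defines "A \<equiv> Bl K (zspan (\<lambda>i. \<gamma> ^ i) 2)"
  shows "A = colon K M M
       \<and> colon K M M = Zadj \<gamma> \<inter> Zadj (inverse \<gamma>)
       \<and> Zadj \<gamma> \<inter> Zadj (inverse \<gamma>) = setadd Zset N
       \<and> setadd Zset N = setadd Zset D
       \<and> ideal N (subring_struct A) \<and> ideal D (subring_struct A)
       \<and> setadd N D = A
       \<and> invertible_ideal K A N \<and> invertible_ideal K A D
       \<and> subring_struct A Quot N \<simeq> ZFact (a 0)
       \<and> subring_struct A Quot D \<simeq> ZFact (a n)
       \<and> colon K N D = (\<lambda>x. \<gamma> * x) ` A"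
proof -
  interpret ctx f \<gamma> n by (unfold_locales; fact)
  have pe: "p = pp" unfolding p_def a_def by (simp add: fun_eq_iff pp_def)
  have qe: "q = qq" unfolding q_def a_def by (simp add: fun_eq_iff qq_def)
  have Ae: "A = R" unfolding A_def K_def using Bl_eq R_eq_colon[symmetric] by (rule trans)
  have e1: "colon K M M = R" unfolding K_def M_def using R_eq_colon by (rule sym)
  have e2: "Zadj \<gamma> \<inter> Zadj (inverse \<gamma>) = R" using R_eq_Zadj by (rule sym)
  have e3: "setadd Zset N = R" unfolding N_def qe using ZN_eq .
  have e4: "setadd Zset D = R" unfolding D_def pe ..
  have e5: "N = ctx.N f \<gamma> n" unfolding N_def qe ..
  have e6: "D = ctx.D f \<gamma> n" unfolding D_def pe ..
  have e7: "K = numfield \<gamma>" unfolding K_def ..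
  show ?thesis
    unfolding Ae e1 e2 e3 e4
    unfolding e5 e6 e7 a_def
    using ideal_N ideal_D ND_eq inv_N inv_D quot_N quot_D colon_ND
    by (intro conjI) (assumption | rule refl)+
qed

end
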